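(* Let $d\ge3$ be an integer. The function $$q_d(\gamma)=\frac{1-\frac{F^*(d^2-1,\gamma)}{(d-1)^2}}{1-\gamma}$$ on the interval $-\frac1{d-1}\le\gamma<1$ attains its minimum at $\gamma=-\frac1{d-1}$.
   Context: For an integer $k\ge1$ and $\gamma\in[-1,1]$, $$F^*(k,\gamma)=\frac{2\gamma}{k}\left(\frac{\Gamma((k+1)/2)}{\Gamma(k/2)}\right)^2 {}_2F_1\!\left(\tfrac12,\tfrac12;\tfrac k2+1;\gamma^2\right),$$ where ${}_2F_1$ is the Gaussian hypergeometric function. *)

theory Defs
  imports "HOL-Analysis.Analysis"
begin

definition hyp2F1 :: "real \<Rightarrow> real \<Rightarrow> real \<Rightarrow> real \<Rightarrow> real" where
  "hyp2F1 a b c z = (\<Sum>n. pochhammer a n * pochhammer b n / (pochhammer c n * fact n) * z ^ n)"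

definition Fstar :: "nat \<Rightarrow> real \<Rightarrow> real" where
  "Fstar k \<gamma> = 2 * \<gamma> / real k * (Gamma ((real k + 1) / 2) / Gamma (real k / 2))\<^sup>2
      * hyp2F1 (1/2) (1/2) (real k / 2 + 1) (\<gamma>\<^sup>2)"

definition q :: "nat \<Rightarrow> real \<Rightarrow> real" where
  "q d \<gamma> = (1 - Fstar (d\<^sup>2 - 1) \<gamma> / (real d - 1)\<^sup>2) / (1 - \<gamma>)"

end

theory Submission imports Defs "HOL-Real_Asymp.Real_Asymp" begin

lemma gamma_half_bound:
  fixes x :: real assumes x: "x > 0"
  shows "Gamma (x + 1/2) ^ 2 \<le> x * Gamma x ^ 2"
proof -
  have "(ln \<circ> Gamma) ((1 - 1/2) *\<^sub>R x + (1/2) *\<^sub>R (x+1)) \<le> (1 - 1/2) * (ln \<circ> Gamma) x + (1/2) * (ln \<circ> Gamma) (x+1)"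
    by (rule convex_onD[OF log_convex_Gamma_real]) (use x in auto)
  moreover have "(1 - 1/2) *\<^sub>R x + (1/2) *\<^sub>R (x+1) = x + 1/2" by (simp add: field_simps)
  ultimately have h: "ln (Gamma (x + 1/2)) \<le> (ln (Gamma x) + ln (Gamma (x+1))) / 2"
    by (simp add: algebra_simps)
  have nz: "x \<notin> \<int>\<^sub>\<le>\<^sub>0" using x by (auto elim!: nonpos_Ints_cases)
  have g1: "Gamma (x+1) = x * Gamma x" by (rule Gamma_plus1[OF nz])
  have p1: "Gamma (x + 1/2) > 0" "Gamma x > 0" "Gamma (x+1) > 0" using x by auto
  have "2 * ln (Gamma (x + 1/2)) \<le> ln (Gamma x * Gamma (x+1))"
    using h p1 by (simp add: ln_mult)
  hence "ln (Gamma (x + 1/2) ^ 2) \<le> ln (Gamma x * Gamma (x+1))"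
    using p1 by (simp add: ln_realpow)
  hence "Gamma (x + 1/2) ^ 2 \<le> Gamma x * Gamma (x+1)"
    using p1 by (subst (asm) ln_le_cancel_iff) auto
  thus ?thesis using g1 by (simp add: power2_eq_square algebra_simps)
qed

lemma poch_half_le: "pochhammer (1/2::real) n \<le> fact n"
proof (induction n)
  case (Suc n)
  have "pochhammer (1/2::real) (Suc n) = (1/2 + real n) * pochhammer (1/2) n" by (simp add: pochhammer_rec')
  also have "\<dots> \<le> (1 + real n) * fact n"
    by (rule mult_mono) (use Suc pochhammer_nonneg[of "1/2::real" n] in auto)
  also have "\<dots> = fact (Suc n)" by simp
  finally show ?case .
qed simp

lemma poch_mono: "0 < a \<Longrightarrow> a \<le> (b::real) \<Longrightarrow> pochhammer a n \<le> pochhammer b n"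
proof (induction n)
  case (Suc n)
  have "pochhammer a (Suc n) = (a + real n) * pochhammer a n" by (simp add: pochhammer_rec')
  also have "\<dots> \<le> (b + real n) * pochhammer b n"
    by (rule mult_mono) (use Suc pochhammer_nonneg[of a n] in auto)
  also have "\<dots> = pochhammer b (Suc n)" by (simp add: pochhammer_rec')
  finally show ?case .
qed simp

lemma poch4: "pochhammer (4::real) n = fact (n+3) / 6"
proof (induction n)
  case 0 then show ?case by (simp add: fact_numeral)
next
  case (Suc n)
  have "pochhammer (4::real) (Suc n) = (4 + real n) * pochhammer 4 n" by (simp add: pochhammer_rec')
  also have "\<dots> = (real (Suc (n+3))) * fact (n+3) / 6" using Suc by (simp add: algebra_simps)
  also have "\<dots> = fact (Suc (n+3)) / 6" by (simp only: fact_Suc)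
  finally show ?case by (simp add: add.commute add.left_commute)
qed

lemma pow_diff_bound:
  fixes s t :: real assumes "0 \<le> s" "s \<le> t"
  shows "t^(Suc m) - s^(Suc m) \<le> real (Suc m) * t^m * (t - s)"
proof (induction m)
  case (Suc m)
  have "t^(Suc (Suc m)) - s^(Suc (Suc m)) = t * (t^Suc m - s^Suc m) + s^Suc m * (t - s)"
    by (simp add: algebra_simps)
  also have "\<dots> \<le> t * (real (Suc m) * t^m * (t - s)) + t^Suc m * (t - s)"
    apply (rule add_mono)
     apply (rule mult_left_mono[OF Suc]) using assms apply simp
    apply (rule mult_right_mono) apply (rule power_mono) using assms by auto
  also have "\<dots> = real (Suc (Suc m)) * t^Suc m * (t - s)" by (simp add: algebra_simps)
  finally show ?case .
qed simp

lemma pow2_ge: "real (Suc m) \<le> 2 ^ m"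
proof (induction m)
  case (Suc m) thus ?case by simp
qed simp

lemma term_bound:
  fixes s t :: real assumes "0 \<le> s" "s \<le> t" "t \<le> 1/2"
  shows "(1+s) * t^(2*n+1) - (1+t) * s^(2*n+1) \<le> 3/2 * (t - s)"
proof -
  let ?m = "2*n"
  have a: "s * t^?m \<le> t^(Suc ?m)" using assms by (simp add: mult_right_mono)
  have hs: "s^Suc ?m \<le> t^Suc ?m" by (rule power_mono) (use assms in auto)
  have a2: "s * (t * t^?m) \<le> t * (t * t^?m)" using assms by (intro mult_right_mono) auto
  have "(1+s) * t^(2*n+1) - (1+t) * s^(2*n+1) = (t^Suc ?m - s^Suc ?m) + t * (s * t^?m - s^Suc ?m)"
    by (simp add: algebra_simps)
  also have "\<dots> \<le> (1 + t) * (t^Suc ?m - s^Suc ?m)"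
    using a a2 assms by (simp add: algebra_simps mult_left_mono)
  also have "\<dots> \<le> (3/2) * (real (Suc ?m) * t^?m * (t - s))"
    apply (rule mult_mono) using hs pow_diff_bound[OF assms(1,2), of ?m] assms by (auto intro: power_mono)
  also have "real (Suc ?m) * t^?m \<le> 1"
  proof -
    have "t^?m \<le> (1/2)^?m" using assms by (auto intro: power_mono)
    hence "real (Suc ?m) * t^?m \<le> 2^?m * (1/2)^?m"
      using pow2_ge[of ?m] assms by (intro mult_mono) auto
    thus ?thesis by (simp add: power_one_over)
  qed
  hence "(3/2) * (real (Suc ?m) * t^?m * (t - s)) \<le> 3/2 * (t - s)"
    using assms mult_right_mono[OF \<open>real (Suc ?m) * t^?m \<le> 1\<close>, of "t - s"] by (simp add: algebra_simps)
  finally show ?thesis .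
qed

lemma tel_eq: fixes x :: real assumes "x \<ge> 0"
  shows "-3/((x+1+1)*(x+1+2)) - -3/((x+1)*(x+2)) = 6/((x+1)*(x+2)*(x+3))"
proof -
  have h: "x+1 \<noteq> 0" "x+2 \<noteq> 0" "x+3 \<noteq> 0" "x+1+1 \<noteq> 0" "x+1+2 \<noteq> 0" using assms by auto
  show ?thesis using h by (simp add: divide_simps del: of_nat_Suc) (simp add: algebra_simps)
qed

lemma w_sums: "(\<lambda>n. 6 / ((real n+1)*(real n+2)*(real n+3))) sums (3/2)"
proof -
  let ?f = "\<lambda>n::nat. -3 / ((real n+1)*(real n+2))"
  have "?f \<longlonglongrightarrow> 0" by real_asymp
  from telescope_sums[OF this] have "(\<lambda>n. ?f (Suc n) - ?f n) sums (0 - ?f 0)" .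
  moreover have "(\<lambda>n. ?f (Suc n) - ?f n) = (\<lambda>n. 6 / ((real n+1)*(real n+2)*(real n+3)))"
  proof (rule ext)
    fix n :: nat
    have h: "real n + 1 > 0" "real n + 2 > 0" "real n + 3 > 0" by auto
    show "?f (Suc n) - ?f n = 6 / ((real n+1)*(real n+2)*(real n+3))"
      using tel_eq[of "real n"] by (simp add: add.assoc add.commute)
  qed
  ultimately show ?thesis by simp
qed

definition acoef :: "real \<Rightarrow> nat \<Rightarrow> real" where
  "acoef c n = pochhammer (1/2) n * pochhammer (1/2) n / (pochhammer c n * fact n)"

lemma acoef_nonneg: "c > 0 \<Longrightarrow> acoef c n \<ge> 0"
  unfolding acoef_def by (intro divide_nonneg_pos mult_nonneg_nonneg mult_pos_pos pochhammer_pos pochhammer_nonneg) auto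

lemma acoef_le: assumes "c \<ge> 4" shows "acoef c n \<le> 6 / ((real n+1)*(real n+2)*(real n+3))"
proof -
  have pc: "pochhammer c n > 0" using assms by (intro pochhammer_pos) auto
  have p4: "pochhammer (4::real) n > 0" by (intro pochhammer_pos) auto
  have fpos: "(fact n::real) > 0" by simp
  have "acoef c n \<le> fact n * fact n / (pochhammer c n * fact n)"
    unfolding acoef_def
    by (intro divide_right_mono mult_mono poch_half_le pochhammer_nonneg) (use pc in auto)
  also have "\<dots> = fact n / pochhammer c n" using fpos by simp
  also have "\<dots> \<le> fact n / pochhammer 4 n"
    by (intro divide_left_mono poch_mono) (use assms pc p4 in auto)
  also have "\<dots> = 6 * fact n / fact (n+3)" by (simp add: poch4)
  also have "fact (n+3) = (real n+1)*(real n+2)*(real n+3) * (fact n :: real)"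
  proof -
    have "(fact (n+3)::real) = fact (Suc (Suc (Suc n)))" by (simp only: numeral_3_eq_3 add_Suc_right add_0_right)
    also have "\<dots> = (real n+3)*((real n+2)*((real n+1)* fact n))" by (simp only: fact_Suc of_nat_Suc) (simp add: algebra_simps)
    finally show ?thesis by (simp add: algebra_simps)
  qed
  also have "6 * fact n / ((real n+1)*(real n+2)*(real n+3) * (fact n :: real)) = 6 / ((real n+1)*(real n+2)*(real n+3))"
    using fpos by simp
  finally show ?thesis .
qed

lemma acoef_summable: "c \<ge> 4 \<Longrightarrow> summable (acoef c)"
  by (rule summable_comparison_test'[OF sums_summable[OF w_sums], of 0])
     (use acoef_nonneg acoef_le in auto)

lemma acoef_suminf: assumes "c \<ge> 4" shows "suminf (acoef c) \<le> 3/2"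
  using suminf_le[OF acoef_le[OF assms] acoef_summable[OF assms] sums_summable[OF w_sums]] sums_unique[OF w_sums]
  by auto

lemma acoef_pow_summable: assumes "c \<ge> 4" "\<bar>x\<bar> \<le> 1" shows "summable (\<lambda>n. acoef c n * x^n)"
proof (rule summable_comparison_test'[OF acoef_summable[OF assms(1)], of 0])
  fix n :: nat
  have "\<bar>x\<bar>^n \<le> 1" using assms by (simp add: power_le_one)
  thus "norm (acoef c n * x^n) \<le> acoef c n"
    using acoef_nonneg[of c n] assms by (simp add: abs_mult power_abs mult_left_le)
qed

lemma core:
  fixes a :: "nat \<Rightarrow> real" and B t S \<gamma> :: real
  assumes t: "0 < t" "t \<le> 1/2" and B: "B \<ge> 0" and an: "\<And>n. a n \<ge> 0"
    and sm: "\<And>x. \<bar>x\<bar> \<le> 1 \<Longrightarrow> (\<lambda>n. a n * x^n) sums H x"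
    and S: "a sums S" and BS: "B * S \<le> 3/8"
    and g: "-t \<le> \<gamma>" "\<gamma> < 1"
  shows "(1 - B * (-t) * H ((-t)\<^sup>2)) / (1 - (-t)) \<le> (1 - B * \<gamma> * H (\<gamma>\<^sup>2)) / (1 - \<gamma>)"
proof -
  have Hle: "H x \<le> S" if "0 \<le> x" "x \<le> 1" for x
  proof -
    have "a n * x^n \<le> a n" for n using an[of n] that by (simp add: mult_left_le power_le_one)
    thus ?thesis using sums_le[OF _ sm S] that by auto
  qed
  have Hge: "H x \<ge> 0" if "0 \<le> x" "x \<le> 1" for x
    using sums_le[OF _ sums_zero sm[of x]] an that by auto
  have Sge: "S \<ge> 0" using sums_le[OF _ sums_zero S] an by auto
  have pos1: "1 - \<gamma> > 0" "1 - (-t) > 0" using g t by auto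
  have key: "(1 + B * t * H (t\<^sup>2)) * (1 - \<gamma>) \<le> (1 - B * \<gamma> * H (\<gamma>\<^sup>2)) * (1 + t)"
  proof (cases "\<gamma> \<ge> 0")
    case True
    have g2: "\<gamma>\<^sup>2 \<le> 1" using True g by (simp add: power_le_one)
    have t2: "t\<^sup>2 \<le> 1" using t by (simp add: power_le_one)
    have h1: "B * t * H (t\<^sup>2) \<le> B * t * S" using Hle[of "t\<^sup>2"] t2 B t by (intro mult_left_mono) auto
    have h2: "B * \<gamma> * H (\<gamma>\<^sup>2) \<le> B * \<gamma> * S" using Hle[of "\<gamma>\<^sup>2"] g2 B True by (intro mult_left_mono) auto
    have "(1 + B * t * H (t\<^sup>2)) * (1 - \<gamma>) \<le> (1 + B * S * t) * (1 - \<gamma>)"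
      using h1 pos1 by (intro mult_right_mono) (auto simp: algebra_simps)
    also have "\<dots> \<le> (1 - B * S * \<gamma>) * (1 + t)"
    proof -
      have "0 \<le> (1 - B*S) * (t + \<gamma>)" using BS True t by (intro mult_nonneg_nonneg) auto
      thus ?thesis by (simp add: algebra_simps)
    qed
    also have "\<dots> \<le> (1 - B * \<gamma> * H (\<gamma>\<^sup>2)) * (1 + t)"
      using h2 t by (intro mult_right_mono) (auto simp: algebra_simps)
    finally show ?thesis .
  next
    case False
    define s where "s = -\<gamma>"
    have s: "0 < s" "s \<le> t" using False g s_def by auto
    have ss: "\<bar>s\<^sup>2\<bar> \<le> 1" "\<bar>t\<^sup>2\<bar> \<le> 1" using s t by (auto simp: power_le_one)
    have e: "(\<lambda>n. z * (a n * (z\<^sup>2)^n)) = (\<lambda>n. a n * z^(2*n+1))" for z :: real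
      by (rule ext) (simp add: power_mult[symmetric] algebra_simps)
    have St: "(\<lambda>n. a n * t^(2*n+1)) sums (t * H (t\<^sup>2))"
      using sums_mult[OF sm[OF ss(2)], of t] e[of t] by simp
    have Ss: "(\<lambda>n. a n * s^(2*n+1)) sums (s * H (s\<^sup>2))"
      using sums_mult[OF sm[OF ss(1)], of s] e[of s] by simp
    have U: "(\<lambda>n. a n * ((1+s) * t^(2*n+1) - (1+t) * s^(2*n+1))) sums
             ((1+s) * (t * H (t\<^sup>2)) - (1+t) * (s * H (s\<^sup>2)))"
      using sums_diff[OF sums_mult[OF St, of "1+s"] sums_mult[OF Ss, of "1+t"]]
      by (simp add: algebra_simps)
    have U2: "(\<lambda>n. a n * (3/2 * (t - s))) sums (S * (3/2 * (t - s)))"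
      by (rule sums_mult2[OF S])
    have le: "(1+s) * (t * H (t\<^sup>2)) - (1+t) * (s * H (s\<^sup>2)) \<le> S * (3/2 * (t - s))"
    proof (rule sums_le[OF _ U U2])
      fix n
      have "(1+s) * t^(2*n+1) - (1+t) * s^(2*n+1) \<le> 3/2 * (t - s)"
        using term_bound[of s t n] s t by auto
      thus "a n * ((1+s) * t^(2*n+1) - (1+t) * s^(2*n+1)) \<le> a n * (3/2 * (t - s))"
        using an[of n] by (rule mult_left_mono)
    qed
    have "B * ((1+s) * (t * H (t\<^sup>2)) - (1+t) * (s * H (s\<^sup>2))) \<le> B * (S * (3/2 * (t - s)))"
      using le B by (rule mult_left_mono)
    also have "\<dots> = (B * S) * (3/2 * (t - s))" by simp
    also have "\<dots> \<le> 3/8 * (3/2 * (t - s))" using BS s by (intro mult_right_mono) auto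
    also have "\<dots> \<le> t - s" using s by simp
    finally have "B * ((1+s) * (t * H (t\<^sup>2)) - (1+t) * (s * H (s\<^sup>2))) \<le> t - s" .
    moreover have "\<gamma> = -s" using s_def by simp
    ultimately show ?thesis by (simp add: algebra_simps)
  qed
  show ?thesis using key pos1 by (simp add: divide_le_eq le_divide_eq mult.commute power2_eq_square)
qed

theorem mainTheorem5:
  fixes d :: nat
  assumes "d \<ge> 3"
  shows "\<forall>\<gamma>. -1 / (real d - 1) \<le> \<gamma> \<and> \<gamma> < 1 \<longrightarrow> q d (-1 / (real d - 1)) \<le> q d \<gamma>"
proof (intro allI impI)
  fix \<gamma> :: real
  assume g: "-1 / (real d - 1) \<le> \<gamma> \<and> \<gamma> < 1"
  define kr where "kr = real (d\<^sup>2 - 1)"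
  have d3: "real d \<ge> 3" using assms by simp
  have kr: "kr = (real d)^2 - 1" unfolding kr_def using assms by (simp add: of_nat_diff)
  have "(3::real)^2 \<le> (real d)^2" using d3 by (intro power_mono) auto
  hence kr8: "kr \<ge> 8" using kr by simp
  define c where "c = kr / 2 + 1"
  have c4: "c \<ge> 4" using kr8 c_def by simp
  define H where "H x = (\<Sum>n. acoef c n * x^n)" for x
  have hyp: "hyp2F1 (1/2) (1/2) c x = H x" for x
    unfolding hyp2F1_def H_def acoef_def by simp
  have sm: "(\<lambda>n. acoef c n * x^n) sums H x" if "\<bar>x\<bar> \<le> 1" for x
    unfolding H_def using acoef_pow_summable[OF c4 that] by (rule summable_sums)
  define S where "S = suminf (acoef c)"
  have Ssum: "acoef c sums S" unfolding S_def using acoef_summable[OF c4] by (rule summable_sums)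
  have S32: "S \<le> 3/2" unfolding S_def using acoef_suminf[OF c4] .
  have S0: "S \<ge> 0" using sums_le[OF _ sums_zero Ssum] acoef_nonneg[of c] c4 by auto
  define A where "A = 2 / kr * (Gamma ((kr + 1) / 2) / Gamma (kr / 2))\<^sup>2"
  have A0: "A \<ge> 0" unfolding A_def using kr8 by simp
  have A1: "A \<le> 1"
  proof -
    define x where "x = kr / 2"
    have x0: "x > 0" using kr8 x_def by simp
    have gx: "Gamma x > 0" using x0 by simp
    have e: "(kr + 1) / 2 = x + 1/2" using x_def by simp
    have "(Gamma (x + 1/2) / Gamma x)\<^sup>2 = Gamma (x + 1/2)^2 / Gamma x ^2" by (simp add: power_divide)
    also have "\<dots> \<le> x * Gamma x ^ 2 / Gamma x ^ 2"
      using gamma_half_bound[OF x0] gx by (intro divide_right_mono) auto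
    also have "\<dots> = x" using gx by simp
    finally have "(Gamma (x + 1/2) / Gamma x)\<^sup>2 \<le> x" .
    hence "A \<le> 2 / kr * x" unfolding A_def e x_def[symmetric] using kr8 by (intro mult_left_mono) auto
    thus ?thesis using x_def kr8 by simp
  qed
  define t where "t = 1 / (real d - 1)"
  have t: "0 < t" "t \<le> 1/2" unfolding t_def using d3 by (auto simp: divide_le_eq)
  define B where "B = A / (real d - 1)\<^sup>2"
  have B0: "B \<ge> 0" using A0 B_def by simp
  have "(2::real)^2 \<le> (real d - 1)^2" using d3 by (intro power_mono) auto
  hence dd: "(real d - 1)\<^sup>2 \<ge> 4" by simp
  have BS: "B * S \<le> 3/8"
  proof -
    have "A * S \<le> 1 * (3/2)" using A0 A1 S0 S32 by (intro mult_mono) auto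
    hence "A * S / (real d - 1)\<^sup>2 \<le> (3/2) / 4"
      using dd by (intro frac_le) auto
    thus ?thesis unfolding B_def by simp
  qed
  have qe: "q d z = (1 - B * z * H (z\<^sup>2)) / (1 - z)" for z
    unfolding q_def Fstar_def B_def A_def
    using hyp[of "z\<^sup>2"] kr_def c_def by (simp add: algebra_simps)
  have tt: "-1 / (real d - 1) = -t" unfolding t_def by simp
  have "(1 - B * (-t) * H ((-t)\<^sup>2)) / (1 - (-t)) \<le> (1 - B * \<gamma> * H (\<gamma>\<^sup>2)) / (1 - \<gamma>)"
    by (rule core[OF t B0 acoef_nonneg sm Ssum BS]) (use g tt c4 in auto)
  thus "q d (-1 / (real d - 1)) \<le> q d \<gamma>" unfolding tt qe .
qed
end
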